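(* Let $A = \mathbb{R}^{\ast} \rtimes \mathbb{R}$ be the affine group and let $Z = \{(1,m) : m \in \mathbb{Z}\} \cong \mathbb{Z}$. Then every nonzero $f \in L^2(A)$ has linearly independent left $Z$-translations: if $z_1,\dots,z_n\in Z$ are distinct and $c_1,\dots,c_n\in\mathbb{C}$ are not all zero, then $\sum_k c_k L(z_k) f \neq 0$.
   Context: $\mathbb{R}^\ast=\mathbb{R}\setminus\{0\}$. The affine group $A$ consists of pairs $(a,b)\in\mathbb{R}^\ast\times\mathbb{R}$ with multiplication $(a,b)(c,d)=(ac,b+ad)$; its left Haar measure is $\frac{da\,db}{a^2}$, and $L^2(A)$ is taken with respect to it. $L(g)f(x)=f(g^{-1}x)$. *)

theory Defs
  imports "HOL-Analysis.Analysis"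
begin

definition aff_carrier :: "(real \<times> real) set" where
  "aff_carrier = {(a, b). a \<noteq> 0}"

definition aff_mult :: "real \<times> real \<Rightarrow> real \<times> real \<Rightarrow> real \<times> real" where
  "aff_mult g h = (fst g * fst h, snd g + fst g * snd h)"

definition aff_inv :: "real \<times> real \<Rightarrow> real \<times> real" where
  "aff_inv g = (1 / fst g, - snd g / fst g)"

text \<open>Left Haar measure da db / a^2 (the line a = 0 is a null set).\<close>

definition haar_A :: "(real \<times> real) measure" where
  "haar_A = density (lborel \<Otimes>\<^sub>M lborel)
     (\<lambda>x. if fst x \<noteq> 0 then ennreal (1 / (fst x)\<^sup>2) else 0)"

definition L2_A :: "(real \<times> real \<Rightarrow> complex) set" where
  "L2_A = {f. f \<in> borel_measurable haar_A \<and> integrable haar_A (\<lambda>x. (cmod (f x))\<^sup>2)}"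

definition left_transl :: "real \<times> real \<Rightarrow> (real \<times> real \<Rightarrow> complex) \<Rightarrow> real \<times> real \<Rightarrow> complex" where
  "left_transl g f x = f (aff_mult (aff_inv g) x)"

definition aff_Z :: "(real \<times> real) set" where
  "aff_Z = {(1, real_of_int m) | m. True}"

end

theory Submission imports Defs "HOL-Computational_Algebra.Fundamental_Theorem_Algebra" begin

definition sh :: "real \<Rightarrow> real \<times> real \<Rightarrow> real \<times> real" where
  "sh r x = (fst x, snd x + r)"

definition wA :: "real \<times> real \<Rightarrow> ennreal" where
  "wA x = (if fst x \<noteq> 0 then ennreal (1 / (fst x)\<^sup>2) else 0)"

lemma haar_A_alt: "haar_A = density lborel wA"
  unfolding haar_A_def wA_def lborel_prod ..

lemma sets_haar[simp, measurable_cong]: "sets haar_A = sets borel"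
  by (simp add: haar_A_alt)

lemma meas_haar[simp]: "measurable haar_A N = measurable borel N"
  by (rule measurable_cong_sets) auto

lemma space_haar[simp]: "space haar_A = UNIV"
  by (simp add: haar_A_alt)

lemma fst_meas[measurable]: "(fst :: real \<times> real \<Rightarrow> real) \<in> borel_measurable borel"
  by (intro borel_measurable_continuous_onI continuous_intros)

lemma snd_meas[measurable]: "(snd :: real \<times> real \<Rightarrow> real) \<in> borel_measurable borel"
  by (intro borel_measurable_continuous_onI continuous_intros)

lemma wA_meas[measurable]: "wA \<in> borel_measurable borel"
  unfolding wA_def by measurable

lemma sh_meas[measurable]: "sh r \<in> borel \<rightarrow>\<^sub>M borel"
  unfolding sh_def by (intro borel_measurable_continuous_onI continuous_intros)

lemma sh_plus: "sh r = (+) (0, r)"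
  by (auto simp: sh_def fun_eq_iff)

lemma wA_sh[simp]: "wA (sh r x) = wA x"
  by (simp add: wA_def sh_def)

lemma haar_nn_shift:
  assumes [measurable]: "h \<in> borel_measurable borel"
  shows "(\<integral>\<^sup>+x. h (sh r x) \<partial>haar_A) = (\<integral>\<^sup>+x. h x \<partial>haar_A)"
proof -
  have "(\<integral>\<^sup>+x. h (sh r x) \<partial>haar_A) = (\<integral>\<^sup>+x. wA x * h (sh r x) \<partial>lborel)"
    unfolding haar_A_alt by (subst nn_integral_density) auto
  also have "\<dots> = (\<integral>\<^sup>+x. (\<lambda>y. wA y * h y) (sh r x) \<partial>lborel)" by simp
  also have "\<dots> = (\<integral>\<^sup>+y. wA y * h y \<partial>distr lborel borel (sh r))"
    by (subst nn_integral_distr) auto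
  also have "\<dots> = (\<integral>\<^sup>+y. wA y * h y \<partial>lborel)"
    unfolding sh_plus lborel_distr_plus ..
  also have "\<dots> = (\<integral>\<^sup>+x. h x \<partial>haar_A)"
    unfolding haar_A_alt by (subst nn_integral_density) auto
  finally show ?thesis .
qed

lemma haar_distr: "distr haar_A haar_A (sh r) = haar_A"
proof (rule measure_eqI)
  fix A assume A: "A \<in> sets (distr haar_A haar_A (sh r))"
  hence [measurable]: "A \<in> sets borel" by simp
  have "emeasure (distr haar_A haar_A (sh r)) A = emeasure haar_A (sh r -` A)"
    by (subst emeasure_distr) auto
  also have "\<dots> = (\<integral>\<^sup>+x. indicator A (sh r x) \<partial>haar_A)"
  proof -
    have e: "(\<lambda>x. indicator A (sh r x) :: ennreal) = indicator (sh r -` A)"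
      by (auto simp: indicator_def fun_eq_iff)
    have "sh r -` A \<in> sets haar_A" using measurable_sets_borel[OF sh_meas, of A r] by simp
    thus ?thesis unfolding e by simp
  qed
  also have "\<dots> = (\<integral>\<^sup>+x. indicator A x \<partial>haar_A)"
    by (rule haar_nn_shift) auto
  also have "\<dots> = emeasure haar_A A" by simp
  finally show "emeasure (distr haar_A haar_A (sh r)) A = emeasure haar_A A" .
qed simp

lemma AE_sh: "AE x in haar_A. P x \<Longrightarrow> AE x in haar_A. P (sh r x)"
proof -
  assume "AE x in haar_A. P x"
  hence "AE x in distr haar_A haar_A (sh r). P x" by (simp only: haar_distr)
  moreover have "sh r \<in> haar_A \<rightarrow>\<^sub>M haar_A"
    using sh_meas[of r] by (simp add: measurable_cong_sets[OF sets_haar sets_haar])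
  ultimately show ?thesis by (rule AE_distrD[rotated])
qed

definition L2' :: "(real \<times> real \<Rightarrow> complex) \<Rightarrow> bool" where
  "L2' g \<longleftrightarrow> g \<in> borel_measurable borel \<and> (\<integral>\<^sup>+x. ennreal ((cmod (g x))\<^sup>2) \<partial>haar_A) < \<infinity>"

lemma L2'_sh: "L2' g \<Longrightarrow> L2' (\<lambda>x. g (sh r x))"
  unfolding L2'_def
proof (elim conjE, intro conjI)
  assume [measurable]: "g \<in> borel_measurable borel" and fin: "(\<integral>\<^sup>+x. ennreal ((cmod (g x))\<^sup>2) \<partial>haar_A) < \<infinity>"
  show "(\<lambda>x. g (sh r x)) \<in> borel_measurable borel" by measurable
  show "(\<integral>\<^sup>+x. ennreal ((cmod (g (sh r x)))\<^sup>2) \<partial>haar_A) < \<infinity>"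
    using fin by (subst haar_nn_shift[where h="\<lambda>x. ennreal ((cmod (g x))\<^sup>2)"]) auto
qed

lemma L2'_mult: "L2' g \<Longrightarrow> L2' (\<lambda>x. a * g x)"
  unfolding L2'_def
proof (elim conjE, intro conjI)
  assume [measurable]: "g \<in> borel_measurable borel" and fin: "(\<integral>\<^sup>+x. ennreal ((cmod (g x))\<^sup>2) \<partial>haar_A) < \<infinity>"
  show "(\<lambda>x. a * g x) \<in> borel_measurable borel" by measurable
  have "(\<integral>\<^sup>+x. ennreal ((cmod (a * g x))\<^sup>2) \<partial>haar_A) = (\<integral>\<^sup>+x. ennreal ((cmod a)\<^sup>2) * ennreal ((cmod (g x))\<^sup>2) \<partial>haar_A)"
    by (simp add: norm_mult power_mult_distrib ennreal_mult)
  also have "\<dots> = ennreal ((cmod a)\<^sup>2) * (\<integral>\<^sup>+x. ennreal ((cmod (g x))\<^sup>2) \<partial>haar_A)"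
    by (rule nn_integral_cmult) (simp add: measurable_cong_sets[OF sets_haar refl])
  also have "\<dots> < \<infinity>" using fin by (simp add: ennreal_mult_less_top)
  finally show "(\<integral>\<^sup>+x. ennreal ((cmod (a * g x))\<^sup>2) \<partial>haar_A) < \<infinity>" .
qed

lemma sq_add_bound: "(cmod (a + b))\<^sup>2 \<le> 2 * (cmod a)\<^sup>2 + 2 * (cmod b)\<^sup>2"
proof -
  have "cmod (a + b) \<le> cmod a + cmod b" by (rule norm_triangle_ineq)
  hence "(cmod (a + b))\<^sup>2 \<le> (cmod a + cmod b)\<^sup>2" by (simp add: power_mono)
  also have "\<dots> \<le> 2 * (cmod a)\<^sup>2 + 2 * (cmod b)\<^sup>2"
    by (simp add: power2_sum) (smt (verit) sum_squares_bound)
  finally show ?thesis .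
qed

lemma L2'_add: "L2' g \<Longrightarrow> L2' h \<Longrightarrow> L2' (\<lambda>x. g x + h x)"
  unfolding L2'_def
proof (elim conjE, intro conjI)
  assume [measurable]: "g \<in> borel_measurable borel" "h \<in> borel_measurable borel"
    and fin: "(\<integral>\<^sup>+x. ennreal ((cmod (g x))\<^sup>2) \<partial>haar_A) < \<infinity>"
     "(\<integral>\<^sup>+x. ennreal ((cmod (h x))\<^sup>2) \<partial>haar_A) < \<infinity>"
  show "(\<lambda>x. g x + h x) \<in> borel_measurable borel" by measurable
  have "(\<integral>\<^sup>+x. ennreal ((cmod (g x + h x))\<^sup>2) \<partial>haar_A) \<le>
     (\<integral>\<^sup>+x. 2 * ennreal ((cmod (g x))\<^sup>2) + 2 * ennreal ((cmod (h x))\<^sup>2) \<partial>haar_A)"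
  proof (rule nn_integral_mono)
    fix x
    have "ennreal ((cmod (g x + h x))\<^sup>2) \<le> ennreal (2 * (cmod (g x))\<^sup>2 + 2 * (cmod (h x))\<^sup>2)"
      by (rule ennreal_leI) (rule sq_add_bound)
    also have "\<dots> = 2 * ennreal ((cmod (g x))\<^sup>2) + 2 * ennreal ((cmod (h x))\<^sup>2)"
      by (simp add: ennreal_plus[symmetric] ennreal_mult)
    finally show "ennreal ((cmod (g x + h x))\<^sup>2) \<le> 2 * ennreal ((cmod (g x))\<^sup>2) + 2 * ennreal ((cmod (h x))\<^sup>2)" .
  qed
  also have "\<dots> = 2 * (\<integral>\<^sup>+x. ennreal ((cmod (g x))\<^sup>2) \<partial>haar_A) + 2 * (\<integral>\<^sup>+x. ennreal ((cmod (h x))\<^sup>2) \<partial>haar_A)"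
  proof -
    have m: "(\<lambda>x. 2 * ennreal ((cmod (g x))\<^sup>2)) \<in> borel_measurable haar_A"
            "(\<lambda>x. 2 * ennreal ((cmod (h x))\<^sup>2)) \<in> borel_measurable haar_A"
      by simp_all measurable
    show ?thesis
      by (simp add: nn_integral_add[OF m] nn_integral_cmult)
  qed
  also have "\<dots> < \<infinity>" using fin by (simp add: ennreal_mult_less_top)
  finally show "(\<integral>\<^sup>+x. ennreal ((cmod (g x + h x))\<^sup>2) \<partial>haar_A) < \<infinity>" .
qed

lemma L2'_zero: "L2' (\<lambda>x. 0)"
  unfolding L2'_def by simp

lemma L2'_sum: "finite A \<Longrightarrow> (\<And>i. i \<in> A \<Longrightarrow> L2' (h i)) \<Longrightarrow> L2' (\<lambda>x. \<Sum>i\<in>A. h i x)"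
  by (induction A rule: finite_induct) (auto intro: L2'_add L2'_zero)

lemma sh_sh: "sh a (sh b x) = sh (b + a) x"
  by (simp add: sh_def add.assoc)

definition opP :: "complex poly \<Rightarrow> (real \<times> real \<Rightarrow> complex) \<Rightarrow> real \<times> real \<Rightarrow> complex" where
  "opP P g x = (\<Sum>i\<le>degree P. coeff P i * g (sh (real i) x))"

lemma opP_ext: "degree P \<le> N \<Longrightarrow> opP P g x = (\<Sum>i\<le>N. coeff P i * g (sh (real i) x))"
  unfolding opP_def by (rule sum.mono_neutral_left) (auto simp: coeff_eq_0)

lemma opP_L2: "L2' g \<Longrightarrow> L2' (opP P g)"
proof -
  assume g: "L2' g"
  have e: "opP P g = (\<lambda>x. \<Sum>i\<le>degree P. coeff P i * g (sh (real i) x))"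
    by (simp add: fun_eq_iff opP_def)
  show ?thesis unfolding e
    by (rule L2'_sum) (auto intro!: L2'_mult L2'_sh g)
qed

lemma opP_const: "opP [:c:] g x = c * g x"
  by (simp add: opP_def sh_def)

lemma opP_factor: "opP ([:-l,1:] * Q) g x = opP Q g (sh 1 x) - l * opP Q g x"
proof -
  define N where "N = Suc (degree Q)"
  have P: "[:-l,1:] * Q = pCons 0 Q - smult l Q"
    by (simp add: mult_pCons_left)
  have deg: "degree ([:-l,1:] * Q) \<le> N"
    unfolding N_def by (rule order.trans[OF degree_mult_le]) simp
  have "opP ([:-l,1:] * Q) g x = (\<Sum>i\<le>N. coeff (pCons 0 Q) i * g (sh (real i) x)) - l * (\<Sum>i\<le>N. coeff Q i * g (sh (real i) x))"
    by (subst opP_ext[OF deg]) (simp add: P algebra_simps sum_subtractf sum_distrib_left)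
  also have "(\<Sum>i\<le>N. coeff Q i * g (sh (real i) x)) = opP Q g x"
    by (rule opP_ext[symmetric]) (simp add: N_def)
  also have "(\<Sum>i\<le>N. coeff (pCons 0 Q) i * g (sh (real i) x)) = (\<Sum>i\<le>degree Q. coeff Q i * g (sh (real (Suc i)) x))"
    unfolding N_def by (subst sum.atMost_Suc_shift) simp
  also have "\<dots> = opP Q g (sh 1 x)"
    unfolding opP_def by (simp add: sh_sh add.commute)
  finally show ?thesis .
qed

lemma enn_arch:
  fixes a C :: ennreal
  assumes le: "\<And>N::nat. of_nat N * a \<le> C" and fin: "C < \<infinity>"
  shows "a = 0"
proof -
  have "a \<le> C" using le[of 1] by simp
  hence "a < \<infinity>" using fin by auto
  then obtain r where a: "a = ennreal r" "r \<ge> 0" by (cases a) auto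
  obtain c where C: "C = ennreal c" "c \<ge> 0" using fin by (cases C) auto
  have Nr: "real N * r \<le> c" for N
  proof -
    have "ennreal (real N * r) \<le> ennreal c"
      using le[of N] a C by (simp add: ennreal_of_nat_eq_real_of_nat ennreal_mult)
    thus ?thesis using C(2) by (simp add: ennreal_le_iff)
  qed
  show ?thesis
  proof (rule ccontr)
    assume "a \<noteq> 0"
    hence "r > 0" using a by auto
    then obtain N where "c < real N * r" using ex_less_of_nat_mult by blast
    thus False using Nr[of N] by simp
  qed
qed

definition S :: "int \<Rightarrow> (real \<times> real) set" where
  "S j = {x. real_of_int j \<le> snd x \<and> snd x < real_of_int j + 1}"

lemma S_meas[measurable]: "S j \<in> sets borel"
proof -
  have "S j = snd -` {real_of_int j..<real_of_int j + 1}" by (auto simp: S_def)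
  thus ?thesis using measurable_sets_borel[OF snd_meas, of "{real_of_int j..<real_of_int j + 1}"] by simp
qed

lemma S_floor: "x \<in> S j \<longleftrightarrow> \<lfloor>snd x\<rfloor> = j"
  unfolding S_def by (auto simp: floor_eq_iff)

lemma sum_ind_le1:
  fixes js :: "nat \<Rightarrow> int"
  assumes "inj js"
  shows "(\<Sum>k<N. indicator (S (js k)) x :: ennreal) \<le> 1"
proof (cases "\<exists>k0<N. x \<in> S (js k0)")
  case True
  then obtain k0 where k0: "k0 < N" "x \<in> S (js k0)" by blast
  have "(\<Sum>k<N. indicator (S (js k)) x :: ennreal) = (\<Sum>k<N. if k = k0 then 1 else 0)"
  proof (rule sum.cong[OF refl])
    fix k assume "k \<in> {..<N}"
    show "(indicator (S (js k)) x :: ennreal) = (if k = k0 then 1 else 0)"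
      using k0 assms S_floor[of x] by (auto simp: indicator_def dest: injD)
  qed
  also have "\<dots> = 1" using k0 by (subst sum.delta) (auto simp del: lessThan_iff)
  finally show ?thesis by simp
next
  case False
  hence "(\<Sum>k<N. indicator (S (js k)) x :: ennreal) = 0"
    by (intro sum.neutral) (auto simp: indicator_def)
  thus ?thesis by simp
qed

lemma lemG:
  assumes L: "L2' t" and AE: "AE x in haar_A. t (sh 1 x) = l * t x"
  shows "AE x in haar_A. t x = 0"
proof -
  from L have [measurable]: "t \<in> borel_measurable borel"
    and fin: "(\<integral>\<^sup>+x. ennreal ((cmod (t x))\<^sup>2) \<partial>haar_A) < \<infinity>"
    by (auto simp: L2'_def)
  define C where "C = (\<integral>\<^sup>+x. ennreal ((cmod (t x))\<^sup>2) \<partial>haar_A)"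
  define I where "I j = (\<integral>\<^sup>+x. ennreal ((cmod (t x))\<^sup>2) * indicator (S j) x \<partial>haar_A)" for j
  have step: "I (j+1) = ennreal ((cmod l)\<^sup>2) * I j" for j
  proof -
    have "I (j+1) = (\<integral>\<^sup>+x. (\<lambda>y. ennreal ((cmod (t y))\<^sup>2) * indicator (S (j+1)) y) (sh 1 x) \<partial>haar_A)"
      unfolding I_def by (rule haar_nn_shift[symmetric]) measurable
    also have "\<dots> = (\<integral>\<^sup>+x. ennreal ((cmod l)\<^sup>2) * (ennreal ((cmod (t x))\<^sup>2) * indicator (S j) x) \<partial>haar_A)"
    proof (rule nn_integral_cong_AE)
      show "AE x in haar_A. (\<lambda>y. ennreal ((cmod (t y))\<^sup>2) * indicator (S (j+1)) y) (sh 1 x) =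
          ennreal ((cmod l)\<^sup>2) * (ennreal ((cmod (t x))\<^sup>2) * indicator (S j) x)"
        using AE
      proof eventually_elim
        case (elim x)
        have i: "indicator (S (j+1)) (sh 1 x) = (indicator (S j) x :: ennreal)"
          by (auto simp: indicator_def S_def sh_def)
        show ?case unfolding i using elim
          by (simp add: norm_mult power_mult_distrib ennreal_mult mult.assoc)
      qed
    qed
    also have "\<dots> = ennreal ((cmod l)\<^sup>2) * I j"
      unfolding I_def by (rule nn_integral_cmult) simp
    finally show ?thesis .
  qed
  have sumb: "(\<Sum>k<N. I (js k)) \<le> C" if inj: "inj js" for js :: "nat \<Rightarrow> int" and N
  proof -
    have "(\<Sum>k<N. I (js k)) = (\<integral>\<^sup>+x. (\<Sum>k<N. ennreal ((cmod (t x))\<^sup>2) * indicator (S (js k)) x) \<partial>haar_A)"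
      unfolding I_def by (rule nn_integral_sum[symmetric]) simp
    also have "\<dots> \<le> C"
      unfolding C_def
    proof (rule nn_integral_mono)
      fix x
      have "(\<Sum>k<N. ennreal ((cmod (t x))\<^sup>2) * indicator (S (js k)) x) =
          ennreal ((cmod (t x))\<^sup>2) * (\<Sum>k<N. indicator (S (js k)) x)"
        by (simp add: sum_distrib_left)
      also have "\<dots> \<le> ennreal ((cmod (t x))\<^sup>2) * 1"
        by (rule mult_left_mono[OF sum_ind_le1[OF inj]]) simp
      finally show "(\<Sum>k<N. ennreal ((cmod (t x))\<^sup>2) * indicator (S (js k)) x) \<le> ennreal ((cmod (t x))\<^sup>2)" by simp
    qed
    finally show ?thesis .
  qed
  have zero: "I j0 = 0" for j0
  proof -
    obtain js :: "nat \<Rightarrow> int" where inj: "inj js" and ge: "\<And>k. I j0 \<le> I (js k)"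
    proof (cases "cmod l \<ge> 1")
      case True
      hence c1: "1 \<le> ennreal ((cmod l)\<^sup>2)"
        by (simp add: ennreal_1[symmetric] del: ennreal_1)
      have "I j0 \<le> I (j0 + int k)" for k
      proof (induction k)
        case (Suc k)
        have "I (j0 + int k) \<le> ennreal ((cmod l)\<^sup>2) * I (j0 + int k)"
          using mult_right_mono[OF c1, of "I (j0 + int k)"] by simp
        also have "\<dots> = I (j0 + int (Suc k))" proof -
          have e: "j0 + int (Suc k) = (j0 + int k) + 1" by simp
          show ?thesis unfolding e by (rule step[symmetric])
        qed
        finally show ?case using Suc by simp
      qed simp
      moreover have "inj (\<lambda>k. j0 + int k)" by (auto simp: inj_on_def)
      ultimately show ?thesis by (intro that[of "\<lambda>k. j0 + int k"]) auto
    next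
      case False
      hence c1: "ennreal ((cmod l)\<^sup>2) \<le> 1"
        by (simp add: ennreal_1[symmetric] del: ennreal_1) (smt (verit) norm_ge_zero power_le_one)
      have "I j0 \<le> I (j0 - int k)" for k
      proof (induction k)
        case (Suc k)
        have "I (j0 - int (Suc k) + 1) = ennreal ((cmod l)\<^sup>2) * I (j0 - int (Suc k))" by (rule step)
        also have "\<dots> \<le> I (j0 - int (Suc k))"
          using mult_right_mono[OF c1, of "I (j0 - int (Suc k))"] by simp
        finally show ?case using Suc by simp
      qed simp
      moreover have "inj (\<lambda>k. j0 - int k)" by (auto simp: inj_on_def)
      ultimately show ?thesis by (intro that[of "\<lambda>k. j0 - int k"]) auto
    qed
    have "of_nat N * I j0 \<le> C" for N
    proof -
      have "of_nat N * I j0 = (\<Sum>k<N. I j0)" by simp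
      also have "\<dots> \<le> (\<Sum>k<N. I (js k))" by (rule sum_mono) (rule ge)
      also have "\<dots> \<le> C" by (rule sumb[OF inj])
      finally show ?thesis .
    qed
    thus ?thesis using enn_arch fin unfolding C_def by blast
  qed
  have "\<forall>j. AE x in haar_A. ennreal ((cmod (t x))\<^sup>2) * indicator (S j) x = 0"
  proof
    fix j
    show "AE x in haar_A. ennreal ((cmod (t x))\<^sup>2) * indicator (S j) x = 0"
      using zero[of j] unfolding I_def by (subst (asm) nn_integral_0_iff_AE) simp_all
  qed
  hence "AE x in haar_A. \<forall>j. ennreal ((cmod (t x))\<^sup>2) * indicator (S j) x = 0"
    by (rule AE_all_countable[THEN iffD2])
  thus ?thesis
  proof eventually_elim
    case (elim x)
    from elim[rule_format, of "\<lfloor>snd x\<rfloor>"] show ?case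
      by (simp add: S_floor indicator_def)
  qed
qed

lemma mainP: "P \<noteq> 0 \<Longrightarrow> L2' g \<Longrightarrow> AE x in haar_A. opP P g x = 0 \<Longrightarrow> AE x in haar_A. g x = 0"
proof (induction "degree P" arbitrary: P g rule: less_induct)
  case less
  show ?case
  proof (cases "degree P = 0")
    case True
    then obtain c where P: "P = [:c:]" by (metis degree_eq_zeroE)
    with less.prems have c: "c \<noteq> 0" by auto
    from less.prems(3) show ?thesis
      by eventually_elim (use c in \<open>simp add: P opP_const\<close>)
  next
    case False
    hence "\<not> constant (poly P)" by (simp add: constant_degree)
    then obtain l where "poly P l = 0" using fundamental_theorem_of_algebra by blast
    then obtain Q where PQ: "P = [:-l,1:] * Q" using poly_eq_0_iff_dvd by (metis dvdE)
    have Q0: "Q \<noteq> 0" using less.prems PQ by auto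
    have nz: "[:-l,1:] \<noteq> (0::complex poly)" by simp
    have "degree P = degree [:-l,1:] + degree Q" by (simp only: PQ degree_mult_eq[OF nz Q0])
    hence dQ: "degree P = degree Q + 1" by simp
    have Lt: "L2' (opP Q g)" by (rule opP_L2) (rule less.prems)
    have "AE x in haar_A. opP Q g (sh 1 x) = l * opP Q g x"
      using less.prems(3) unfolding PQ opP_factor by eventually_elim simp
    hence "AE x in haar_A. opP Q g x = 0" by (rule lemG[OF Lt])
    thus ?thesis using less.hyps[of Q g] dQ Q0 less.prems(2) by simp
  qed
qed

lemma opP_monoms:
  fixes e :: "nat \<Rightarrow> nat" and c :: "nat \<Rightarrow> complex"
  assumes inj: "inj_on e {..<n}"
  shows "opP (\<Sum>k<n. monom (c k) (e k)) g x = (\<Sum>k<n. c k * g (sh (real (e k)) x))"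
proof -
  define P where "P = (\<Sum>k<n. monom (c k) (e k))"
  define N where "N = degree P + (\<Sum>k<n. e k)"
  have eN: "e k \<le> N" if "k < n" for k
    using member_le_sum[of k "{..<n}" e] that unfolding N_def by simp
  have "opP P g x = (\<Sum>i\<le>N. coeff P i * g (sh (real i) x))"
    by (rule opP_ext) (simp add: N_def)
  also have "\<dots> = (\<Sum>i\<le>N. \<Sum>k<n. (if e k = i then c k * g (sh (real i) x) else 0))"
    unfolding P_def coeff_sum sum_distrib_right by (intro sum.cong refl) simp
  also have "\<dots> = (\<Sum>k<n. \<Sum>i\<le>N. (if e k = i then c k * g (sh (real i) x) else 0))"
    by (rule sum.swap)
  also have "\<dots> = (\<Sum>k<n. c k * g (sh (real (e k)) x))"
    by (rule sum.cong[OF refl]) (use eN in \<open>auto simp: sum.delta\<close>)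
  finally show ?thesis unfolding P_def .
qed

theorem corollary5p5:
  fixes f :: "real \<times> real \<Rightarrow> complex"
    and n :: nat and z :: "nat \<Rightarrow> real \<times> real" and c :: "nat \<Rightarrow> complex"
  assumes "f \<in> L2_A"
    and "\<not> (AE x in haar_A. f x = 0)"
    and "\<forall>k<n. z k \<in> aff_Z"
    and "inj_on z {..<n}"
    and "\<exists>k<n. c k \<noteq> 0"
  shows "\<not> (AE x in haar_A. (\<Sum>k<n. c k * left_transl (z k) f x) = 0)"
proof
  assume AE0: "AE x in haar_A. (\<Sum>k<n. c k * left_transl (z k) f x) = 0"
  have Lf: "L2' f"
    using assms(1) unfolding L2_A_def L2'_def by (auto simp: less_top)
  define m where "m k = (SOME m. z k = (1, real_of_int m))" for k
  have zm: "z k = (1, real_of_int (m k))" if "k < n" for k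
  proof -
    from assms(3) that have "\<exists>m. z k = (1, real_of_int m)" by (auto simp: aff_Z_def)
    thus ?thesis unfolding m_def by (rule someI_ex)
  qed
  have lt: "left_transl (z k) f x = f (sh (- real_of_int (m k)) x)" if "k < n" for k x
    using zm[OF that] by (simp add: left_transl_def aff_mult_def aff_inv_def sh_def)
  obtain k0 where k0: "k0 < n" "c k0 \<noteq> 0" using assms(5) by blast
  define M where "M = Max (m ` {..<n})"
  have mM: "m k \<le> M" if "k < n" for k
    unfolding M_def using that by (intro Max_ge) auto
  define e where "e k = nat (M - m k)" for k
  have re: "real (e k) = real_of_int M - real_of_int (m k)" if "k < n" for k
    using mM[OF that] unfolding e_def by simp
  have inje: "inj_on e {..<n}"
  proof (rule inj_onI)
    fix k k' assume kk: "k \<in> {..<n}" "k' \<in> {..<n}" "e k = e k'"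
    hence "m k = m k'" using mM[of k] mM[of k'] unfolding e_def by simp
    hence "z k = z k'" using zm[of k] zm[of k'] kk by simp
    thus "k = k'" using assms(4) kk by (auto dest: inj_onD)
  qed
  define P where "P = (\<Sum>k<n. monom (c k) (e k))"
  have "coeff P (e k0) = (\<Sum>k<n. if k = k0 then c k else 0)"
    unfolding P_def coeff_sum
    by (rule sum.cong[OF refl]) (use inje k0 in \<open>auto dest: inj_onD\<close>)
  also have "\<dots> = c k0" using k0 by (subst sum.delta) (auto simp del: lessThan_iff)
  finally have "P \<noteq> 0" using k0 by auto
  moreover have "AE x in haar_A. opP P f x = 0"
  proof -
    have "AE x in haar_A. (\<Sum>k<n. c k * f (sh (- real_of_int (m k)) x)) = 0"
      using AE0 by eventually_elim (simp add: lt)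
    hence "AE x in haar_A. (\<Sum>k<n. c k * f (sh (- real_of_int (m k)) (sh (real_of_int M) x))) = 0"
      by (rule AE_sh)
    thus ?thesis
    proof eventually_elim
      case (elim x)
      have "opP P f x = (\<Sum>k<n. c k * f (sh (real (e k)) x))"
        unfolding P_def by (rule opP_monoms[OF inje])
      also have "\<dots> = (\<Sum>k<n. c k * f (sh (- real_of_int (m k)) (sh (real_of_int M) x)))"
        by (rule sum.cong[OF refl]) (simp add: sh_sh re)
      finally show ?case using elim by simp
    qed
  qed
  ultimately have "AE x in haar_A. f x = 0" using mainP Lf by blast
  thus False using assms(2) by simp
qed

end
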